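(* Let $L$ be a positive integer and $U>0$ with $L>\frac{8}{U}$, and let $N=3$. Consider the Lieb-Wu equations with one down spin in the unknowns $k_1,k_2,k_3$ and real $\Lambda$: $$e^{i k_j L} = \frac{\Lambda - \sin k_j - iU/4}{\Lambda - \sin k_j + iU/4},\quad j=1,2,3,\qquad \prod_{j=1}^3 \frac{\Lambda - \sin k_j - iU/4}{\Lambda - \sin k_j + iU/4} = 1.$$ Consider solutions consisting of one $k$-$\Lambda$ two-string and a single real $k$, i.e. $k_1 = q - i\xi$, $k_2 = q+i\xi$ with $q$ real (taken modulo $2\pi$, $q\in[0,2\pi)$), $\xi>0$, and $k_3$ real. Such solutions exist only if $\frac{\pi}{2}<q<\frac{3\pi}{2}$. For every choice of branch of the real momentum $k_3$ (i.e. for every $\ell\in\{1,\dots,L\}$ with $k_3 = q_\ell(\Lambda)$), there exist $L-1$ $k$-$\Lambda$ two-strings if $L$ is odd and $L-2$ $k$-$\Lambda$ two-strings if $L$ is even. This gives a total number of $L(L-1)$ solutions of this type for $L$ odd and $L(L-2)$ for $L$ even.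
   Context: For $L>8/U$ and each real $\Lambda$, the equation $\sin k - \Lambda = \frac{U}{4}\cot\left(\frac{kL}{2}\right)$ has exactly one real solution $k = q_\ell(\Lambda)$ in each interval $[(\ell-1)\frac{2\pi}{L},\ell\frac{2\pi}{L}]$, $\ell=1,\dots,L$; the functions $q_\ell$ are the branches of the real momentum. Real momenta satisfying the first Lieb-Wu equation are exactly the solutions of this equation. The $k_j$ are determined modulo $2\pi$. *)

theory Defs
  imports Complex_Main
begin

definition lw_theta :: "real \<Rightarrow> real \<Rightarrow> complex \<Rightarrow> complex" where
  "lw_theta U \<Lambda> k =
     (complex_of_real \<Lambda> - sin k - \<i> * complex_of_real (U/4)) /
     (complex_of_real \<Lambda> - sin k + \<i> * complex_of_real (U/4))"

definition lieb_wu3 :: "nat \<Rightarrow> real \<Rightarrow> complex \<Rightarrow> complex \<Rightarrow> complex \<Rightarrow> real \<Rightarrow> bool" where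
  "lieb_wu3 L U k1 k2 k3 \<Lambda> \<longleftrightarrow>
     (\<forall>k\<in>{k1, k2, k3}. exp (\<i> * k * of_nat L) = lw_theta U \<Lambda> k) \<and>
     lw_theta U \<Lambda> k1 * lw_theta U \<Lambda> k2 * lw_theta U \<Lambda> k3 = 1"

text \<open>Branch l of the real momentum: the unique solution k in the l-th interval of
  sin k - Lambda = U/4 cot(kL/2). (The open interval is used since the equation has no
  solution at the endpoints, where cot is infinite.)\<close>
definition real_momentum :: "nat \<Rightarrow> real \<Rightarrow> nat \<Rightarrow> real \<Rightarrow> real" where
  "real_momentum L U l \<Lambda> =
     (THE k. (real l - 1) * (2 * pi / real L) < k \<and> k < real l * (2 * pi / real L) \<and>
             sin k - \<Lambda> = U / 4 * cot (k * real L / 2))"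

definition string_solutions :: "nat \<Rightarrow> real \<Rightarrow> (real \<times> real \<times> real \<times> real) set" where
  "string_solutions L U =
     {(q, \<xi>, k3, \<Lambda>). 0 \<le> q \<and> q < 2 * pi \<and> 0 < \<xi> \<and> 0 \<le> k3 \<and> k3 < 2 * pi \<and>
        lieb_wu3 L U (Complex q (- \<xi>)) (Complex q \<xi>) (complex_of_real k3) \<Lambda>}"

end

theory Submission
  imports Defs "HOL-Analysis.Analysis"
begin

locale lw =
  fixes L :: nat and U :: real
  assumes Lpos: "0 < L" and Upos: "0 < U" and big: "8 < U * real L"
begin

definition hk :: "real \<Rightarrow> real" where
  "hk k = sin k - U / 4 * cot (k * real L / 2)"

definition Iv :: "nat \<Rightarrow> real set" where
  "Iv l = {(real l - 1) * (2 * pi / real L) <..< real l * (2 * pi / real L)}"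

lemma Iv_half: 
  assumes "k \<in> Iv l"
  shows "(real l - 1) * pi < k * real L / 2" "k * real L / 2 < real l * pi"
proof -
  have L0: "real L > 0" using Lpos by simp
  from assms have a: "(real l - 1) * (2 * pi / real L) < k" and b: "k < real l * (2 * pi / real L)"
    by (auto simp: Iv_def)
  from a have "(real l - 1) * (2 * pi) < k * real L"
    using L0 by (simp add: pos_divide_less_eq)
  then show "(real l - 1) * pi < k * real L / 2" by simp
  from b have "k * real L < real l * (2 * pi)"
    using L0 by (simp add: pos_less_divide_eq)
  then show "k * real L / 2 < real l * pi" by simp
qed

lemma Iv_sin_ne:
  assumes "k \<in> Iv l"
  shows "sin (k * real L / 2) \<noteq> 0"
proof
  assume "sin (k * real L / 2) = 0"
  then obtain i :: int where i: "k * real L / 2 = of_int i * pi" by (auto simp: sin_zero_iff_int2)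
  from Iv_half[OF assms] i have "(real l - 1) * pi < of_int i * pi" "of_int i * pi < real l * pi" by auto
  then have "real l - 1 < of_int i" "of_int i < real l" by auto
  then have "int l - 1 < i \<and> i < int l"
    by (smt (verit) of_int_1 of_int_diff of_int_less_iff of_int_of_nat_eq)
  then show False by linarith
qed

lemma hk_deriv:
  assumes "sin (k * real L / 2) \<noteq> 0"
  shows "(hk has_real_derivative (cos k + U / 4 * (real L / 2) / (sin (k * real L / 2))\<^sup>2)) (at k)"
proof -
  have d: "((\<lambda>k. k * real L / 2) has_real_derivative (real L / 2)) (at k)"
    by (auto intro!: derivative_eq_intros)
  have c: "((\<lambda>k. cot (k * real L / 2)) has_real_derivative
          (- inverse ((sin (k * real L / 2))\<^sup>2) * (real L / 2))) (at k)"
    by (rule DERIV_chain2[OF DERIV_cot[OF assms] d])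
  have "((\<lambda>k. sin k - U / 4 * cot (k * real L / 2)) has_real_derivative
          (cos k - U / 4 * (- inverse ((sin (k * real L / 2))\<^sup>2) * (real L / 2)))) (at k)"
    by (intro DERIV_diff DERIV_sin DERIV_cmult c)
  then show ?thesis unfolding hk_def by (simp add: field_simps)
qed

lemma hk_deriv_pos:
  assumes "sin (k * real L / 2) \<noteq> 0"
  shows "cos k + U / 4 * (real L / 2) / (sin (k * real L / 2))\<^sup>2 > 0"
proof -
  let ?s = "(sin (k * real L / 2))\<^sup>2"
  have s0: "?s > 0" using assms by simp
  have s1: "?s \<le> 1" by (simp add: abs_square_le_1)
  have "U / 4 * (real L / 2) / ?s \<ge> U / 4 * (real L / 2)"
    using s0 s1 Upos Lpos by (simp add: divide_simps)
  moreover have "U / 4 * (real L / 2) > 1" using big by simp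
  moreover have "cos k \<ge> -1" by simp
  ultimately show ?thesis by linarith
qed

lemma Iv_convex: "a \<in> Iv l \<Longrightarrow> b \<in> Iv l \<Longrightarrow> a \<le> x \<Longrightarrow> x \<le> b \<Longrightarrow> x \<in> Iv l"
  by (auto simp: Iv_def)

lemma hk_mono:
  assumes "a \<in> Iv l" "b \<in> Iv l" "a < b"
  shows "hk a < hk b"
proof (rule DERIV_pos_imp_increasing[OF assms(3)])
  fix x assume "a \<le> x" "x \<le> b"
  then have "x \<in> Iv l" using Iv_convex assms by blast
  then have "sin (x * real L / 2) \<noteq> 0" by (rule Iv_sin_ne)
  then show "\<exists>y. (hk has_real_derivative y) (at x) \<and> 0 < y"
    using hk_deriv hk_deriv_pos by blast
qed

lemma hk_mono_iff:
  assumes "a \<in> Iv l" "b \<in> Iv l"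
  shows "hk a < hk b \<longleftrightarrow> a < b"
  using hk_mono[OF assms] hk_mono[OF assms(2,1)] by (cases a b rule: linorder_cases) auto

lemma hk_inj:
  assumes "a \<in> Iv l" "b \<in> Iv l" "hk a = hk b"
  shows "a = b"
  using hk_mono[OF assms(1,2)] hk_mono[OF assms(2,1)] assms(3) by (cases a b rule: linorder_cases) auto

lemma hk_cont: "k \<in> Iv l \<Longrightarrow> isCont hk k"
  using hk_deriv[OF Iv_sin_ne] by (blast intro: DERIV_isCont)

lemma cot_shift: "cot (x + real n * pi) = cot x"
proof -
  have "sin (x + real n * pi) = (-1)^n * sin x" "cos (x + real n * pi) = (-1)^n * cos x"
    by (simp_all add: sin_add cos_add)
  then show ?thesis by (simp add: cot_def)
qed

lemma hk_exist:
  assumes "l \<in> {1..L}"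
  shows "\<exists>k \<in> Iv l. hk k = \<Lambda>"
proof -
  have L0: "real L > 0" using Lpos by simp
  define t where "t = arctan (U / 4 / (\<bar>\<Lambda>\<bar> + 2))"
  have tpos: "0 < t" unfolding t_def using Upos by (simp add: arctan_less_zero_iff[symmetric] zero_less_arctan_iff)
  have tlt: "t < pi / 2" unfolding t_def by (rule arctan_ubound)
  have cott: "cot t = (\<bar>\<Lambda>\<bar> + 2) / (U / 4)"
    unfolding t_def cot_altdef tan_arctan using Upos by simp
  define a where "a = (real l - 1) * (2 * pi / real L) + 2 * t / real L"
  define b where "b = real l * (2 * pi / real L) - 2 * t / real L"
  have l1: "l \<ge> 1" using assms by auto
  have aL: "a * real L / 2 = t + real (l - 1) * pi" unfolding a_def using L0 l1 by (simp add: field_simps of_nat_diff)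
  have bL: "b * real L / 2 = - t + real l * pi" unfolding b_def using L0 by (simp add: field_simps)
  have ha: "hk a = sin a - (\<bar>\<Lambda>\<bar> + 2)"
    unfolding hk_def aL cot_shift cott using Upos by (simp add: field_simps)
  have hb: "hk b = sin b + (\<bar>\<Lambda>\<bar> + 2)"
    unfolding hk_def bL cot_shift cot_minus cott using Upos by (simp add: field_simps)
  have "2 * t / real L < pi / real L" using tlt L0 by (simp add: divide_strict_right_mono)
  then have ab: "a < b" "a \<in> Iv l" "b \<in> Iv l" using tpos L0
    unfolding a_def b_def Iv_def by (auto simp: field_simps)
  have "hk a \<le> \<Lambda>" using ha sin_le_one[of a] by linarith
  moreover have "\<Lambda> \<le> hk b" using hb sin_ge_minus_one[of b] by linarith
  ultimately obtain k where k: "a \<le> k" "k \<le> b" "hk k = \<Lambda>"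
    using IVT[of hk a \<Lambda> b] ab hk_cont Iv_convex by (metis less_imp_le)
  then have "k \<in> Iv l" using Iv_convex ab by blast
  with k show ?thesis by blast
qed

lemma rm_prop:
  assumes "l \<in> {1..L}"
  shows "real_momentum L U l \<Lambda> \<in> Iv l \<and> hk (real_momentum L U l \<Lambda>) = \<Lambda>"
proof -
  have eq: "((real l - 1) * (2 * pi / real L) < k \<and> k < real l * (2 * pi / real L) \<and>
             sin k - \<Lambda> = U / 4 * cot (k * real L / 2)) \<longleftrightarrow> (k \<in> Iv l \<and> hk k = \<Lambda>)" for k
    by (auto simp: Iv_def hk_def)
  have ex1: "\<exists>!k. k \<in> Iv l \<and> hk k = \<Lambda>"
    using hk_exist[OF assms] hk_inj by blast
  show ?thesis unfolding real_momentum_def eq using theI'[OF ex1] .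
qed

lemma rm_unique:
  assumes "l \<in> {1..L}" "k \<in> Iv l" "hk k = \<Lambda>"
  shows "real_momentum L U l \<Lambda> = k"
  using rm_prop[OF assms(1), of \<Lambda>] hk_inj assms by blast

lemma rm_mono:
  assumes "l \<in> {1..L}" "\<Lambda> < \<Lambda>'"
  shows "real_momentum L U l \<Lambda> < real_momentum L U l \<Lambda>'"
  using rm_prop[OF assms(1), of \<Lambda>] rm_prop[OF assms(1), of \<Lambda>'] hk_mono_iff assms(2) by metis

lemma rm_cont:
  assumes "l \<in> {1..L}"
  shows "isCont (real_momentum L U l) \<Lambda>"
proof -
  let ?k = "real_momentum L U l \<Lambda>"
  have k: "?k \<in> Iv l" "hk ?k = \<Lambda>" using rm_prop[OF assms] by auto
  obtain a b where ab: "a < ?k" "?k < b" "a \<in> Iv l" "b \<in> Iv l"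
  proof -
    define c where "c = (real l - 1) * (2 * pi / real L)"
    define d where "d = real l * (2 * pi / real L)"
    have Ie: "Iv l = {c<..<d}" by (simp add: Iv_def c_def d_def)
    from k(1) have "c < ?k" "?k < d"
      by (auto simp: Ie)
    then show ?thesis
      by (intro that[of "(c + ?k)/2" "(?k + d)/2"]) (auto simp: Ie)
  qed
  have "isCont (real_momentum L U l) (hk ?k)"
    by (rule isCont_inverse_function2[OF ab(1,2)])
       (use ab Iv_convex rm_unique[OF assms] hk_cont in blast)+
  then show ?thesis using k by simp
qed

end

definition Pf :: "nat \<Rightarrow> real \<Rightarrow> real \<Rightarrow> complex \<Rightarrow> complex" where
  "Pf L u \<Lambda> w = (w^2 - 1) * (w^L - 1) + 2 * complex_of_real u * w * (w^L + 1)
      - 2 * \<i> * complex_of_real \<Lambda> * w * (w^L - 1)"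

lemma theta_iff:
  fixes x v :: complex and u :: real
  assumes "u \<noteq> 0" "v \<noteq> 0"
  shows "v = (x - \<i> * of_real u) / (x + \<i> * of_real u) \<longleftrightarrow> x * (v - 1) + \<i> * of_real u * (v + 1) = 0"
proof (cases "x + \<i> * of_real u = 0")
  case True
  then have x: "x = - \<i> * of_real u" by (simp add: eq_neg_iff_add_eq_0)
  have "x * (v - 1) + \<i> * of_real u * (v + 1) = 2 * \<i> * of_real u" unfolding x
    by (simp add: algebra_simps)
  then show ?thesis using True assms by simp
next
  case False
  have "v = (x - \<i> * of_real u) / (x + \<i> * of_real u) \<longleftrightarrow> v * (x + \<i> * of_real u) = x - \<i> * of_real u"
    using False by (simp add: field_simps)
  also have "\<dots> \<longleftrightarrow> x * (v - 1) + \<i> * of_real u * (v + 1) = 0"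
    by (auto simp: algebra_simps)
  finally show ?thesis .
qed

lemma Pf_exp:
  "Pf L u \<Lambda> (exp (\<i> * k)) = -2 * \<i> * exp (\<i> * k) *
     ((complex_of_real \<Lambda> - sin k) * (exp (\<i> * k) ^ L - 1) + \<i> * of_real u * (exp (\<i> * k) ^ L + 1))"
proof -
  define w where "w = exp (\<i> * k)"
  have w0: "w \<noteq> 0" unfolding w_def by simp
  have s: "sin k = (w - inverse w) / (2 * \<i>)"
    unfolding sin_exp_eq w_def by (simp add: exp_minus)
  show ?thesis unfolding w_def[symmetric] s Pf_def using w0
    by (simp add: field_simps power2_eq_square)
qed

lemma lw_iff_Pf:
  assumes "U \<noteq> 0"
  shows "exp (\<i> * k * of_nat L) = lw_theta U \<Lambda> k \<longleftrightarrow> Pf L (U/4) \<Lambda> (exp (\<i> * k)) = 0"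
proof -
  have e: "exp (\<i> * k * of_nat L) = exp (\<i> * k) ^ L"
    by (metis exp_of_nat_mult mult.commute)
  have "exp (\<i> * k * of_nat L) = lw_theta U \<Lambda> k \<longleftrightarrow>
        (complex_of_real \<Lambda> - sin k) * (exp (\<i> * k) ^ L - 1) + \<i> * of_real (U/4) * (exp (\<i> * k) ^ L + 1) = 0"
    unfolding lw_theta_def e by (rule theta_iff) (use assms in auto)
  also have "\<dots> \<longleftrightarrow> Pf L (U/4) \<Lambda> (exp (\<i> * k)) = 0"
    unfolding Pf_exp by simp
  finally show ?thesis .
qed

lemma cis_cot:
  assumes "sin t \<noteq> 0"
  shows "\<i> * (cis (2 * t) + 1) = (cis (2 * t) - 1) * complex_of_real (cot t)"
proof -
  have c: "cos (2*t) = 1 - 2 * (sin t)\<^sup>2" by (rule cos_double_sin)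
  have s: "sin (2*t) = 2 * sin t * cos t" by (rule sin_double)
  have cc: "(cos t)\<^sup>2 = 1 - (sin t)\<^sup>2" by (simp add: cos_squared_eq)
  have e: "cis (2*t) = Complex (1 - 2 * (sin t)\<^sup>2) (2 * sin t * cos t)"
    using c s by (simp add: complex_eq_iff)
  show ?thesis unfolding e using assms
    by (simp add: complex_eq_iff cot_def field_simps power2_eq_square)
       (use sin_cos_squared_add3[of t] in algebra)
qed

lemma Pf_cis:
  assumes "sin (k * real L / 2) \<noteq> 0"
  shows "Pf L u \<Lambda> (cis k) = -2 * \<i> * cis k * (cis (k * real L) - 1) *
            complex_of_real (\<Lambda> - sin k + u * cot (k * real L / 2))"
proof -
  have e: "cis k ^ L = cis (2 * (k * real L / 2))" unfolding Complex.DeMoivre by (simp add: mult.commute)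
  have "Pf L u \<Lambda> (cis k) = -2 * \<i> * cis k *
     ((complex_of_real \<Lambda> - sin (of_real k)) * (cis k ^ L - 1) + of_real u * (\<i> * (cis k ^ L + 1)))"
    using Pf_exp[of L u \<Lambda> "of_real k"] by (simp add: cis_conv_exp mult.assoc)
  also have "\<dots> = -2 * \<i> * cis k * ((complex_of_real \<Lambda> - sin (of_real k)) * (cis k ^ L - 1) +
      of_real u * ((cis (2 * (k * real L / 2)) - 1) * complex_of_real (cot (k * real L / 2))))"
    unfolding e cis_cot[OF assms] ..
  also have "\<dots> = -2 * \<i> * cis k * (cis (k * real L) - 1) *
            complex_of_real (\<Lambda> - sin k + u * cot (k * real L / 2))"
    unfolding e by (simp add: sin_of_real[symmetric] algebra_simps)
  finally show ?thesis .
qed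


lemma prod_dvd_roots:
  fixes p :: "complex poly"
  assumes "finite S" "\<forall>z\<in>S. poly p z = 0"
  shows "(\<Prod>z\<in>S. [:-z, 1:]) dvd p"
  using assms
proof (induction S arbitrary: p rule: finite_induct)
  case empty
  then show ?case by simp
next
  case (insert a S)
  then have "poly p a = 0" by simp
  then obtain p1 where p1: "p = [:-a, 1:] * p1" by (auto simp: poly_eq_0_iff_dvd elim!: dvdE)
  have "\<forall>z\<in>S. poly p1 z = 0"
  proof
    fix z assume "z \<in> S"
    then have "z \<noteq> a" "poly p z = 0" using insert by auto
    then show "poly p1 z = 0" using p1 by simp
  qed
  then have "(\<Prod>z\<in>S. [:-z, 1:]) dvd p1" using insert.IH by blast
  then have "[:-a,1:] * (\<Prod>z\<in>S. [:-z, 1:]) dvd p" unfolding p1 by (rule mult_dvd_mono[OF dvd_refl])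
  then show ?case using insert(1,2) by (metis prod.insert)
qed

lemma cis_inj02:
  assumes "0 \<le> a" "a < 2 * pi" "0 \<le> b" "b < 2 * pi" "cis a = cis b"
  shows "a = b"
proof -
  from assms(5) have "sin a = sin b \<and> cos a = cos b" by (metis cis.sel)
  then obtain n :: int where n: "a = b + 2 * pi * n" by (auto simp: sin_cos_eq_iff)
  have h1: "2 * pi * real_of_int n < 2 * pi * 1" using assms n by linarith
  have "real_of_int n < 1"
  proof (rule ccontr)
    assume "\<not> real_of_int n < 1"
    then have "2 * pi * 1 \<le> 2 * pi * real_of_int n" by (intro mult_left_mono) auto
    with h1 show False by linarith
  qed
  then have n1: "n < 1" by simp
  have h2: "2 * pi * (-1) < 2 * pi * real_of_int n" using assms n by linarith
  have "-1 < real_of_int n"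
  proof (rule ccontr)
    assume "\<not> -1 < real_of_int n"
    then have "2 * pi * real_of_int n \<le> 2 * pi * (-1)" by (intro mult_left_mono) auto
    with h2 show False by linarith
  qed
  then have n2: "-1 < n" by simp
  from n1 n2 have "n = 0" by linarith
  then show ?thesis using n by simp
qed

lemma cis_surj02:
  assumes "cmod w = 1"
  shows "\<exists>k. 0 \<le> k \<and> k < 2 * pi \<and> w = cis k"
proof -
  have w0: "w \<noteq> 0" using assms by auto
  have c: "cis (Arg w) = w" using cis_Arg[OF w0] assms by (simp add: sgn_div_norm)
  show ?thesis
  proof (cases "0 \<le> Arg w")
    case True
    have "Arg w < 2 * pi" using Arg_bounded[of w] pi_gt_zero by linarith
    then show ?thesis using c True by (intro exI[of _ "Arg w"]) auto
  next
    case False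
    have "cis (Arg w + 2 * pi) = w" using c by (simp add: cis_mult[symmetric])
    then show ?thesis using False Arg_bounded[of w] by (intro exI[of _ "Arg w + 2 * pi"]) auto
  qed
qed

lemma cis_double_sq:
  "(cis (2 * t) - 1)\<^sup>2 = - 4 * complex_of_real ((sin t)\<^sup>2) * cis (2 * t)"
proof -
  have c: "cos (2*t) = 1 - 2 * (sin t)\<^sup>2" by (rule cos_double_sin)
  have s: "sin (2*t) = 2 * sin t * cos t" by (rule sin_double)
  have e: "cis (2*t) = Complex (1 - 2 * (sin t)\<^sup>2) (2 * sin t * cos t)"
    using c s by (simp add: complex_eq_iff)
  have cc: "cos t * cos t = 1 - sin t * sin t" using sin_cos_squared_add3[of t] by algebra
  show ?thesis unfolding e
    by (simp add: complex_eq_iff power2_eq_square algebra_simps cc)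
       (use sin_cos_squared_add3[of t] in algebra)
qed

lemma cis_sq_plus1: "(cis k)\<^sup>2 + 1 = complex_of_real (2 * cos k) * cis k"
proof (rule complex_eqI)
  have "sin k * sin k = 1 - cos k * cos k" using sin_cos_squared_add3[of k] by linarith
  then show "Re ((cis k)\<^sup>2 + 1) = Re (complex_of_real (2 * cos k) * cis k)"
    by (simp add: power2_eq_square)
  show "Im ((cis k)\<^sup>2 + 1) = Im (complex_of_real (2 * cos k) * cis k)"
    by (simp add: power2_eq_square)
qed

context lw
begin

definition Pp :: "real \<Rightarrow> complex poly" where
  "Pp \<Lambda> = monom 1 (L+2) - monom 1 2 - monom 1 L + 1 + monom (2 * of_real (U/4)) (L+1)
     + monom (2 * of_real (U/4)) 1 - monom (2 * \<i> * of_real \<Lambda>) (L+1) + monom (2 * \<i> * of_real \<Lambda>) 1"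

lemma poly_Pp: "poly (Pp \<Lambda>) w = Pf L (U/4) \<Lambda> w"
  by (simp add: Pp_def Pf_def poly_monom algebra_simps power2_eq_square)

lemma coeff_Pp_top: "coeff (Pp \<Lambda>) (L+2) = 1"
  unfolding Pp_def using Lpos by simp

lemma degree_Pp: "degree (Pp \<Lambda>) = L + 2"
proof (rule antisym)
  show "degree (Pp \<Lambda>) \<le> L + 2"
    unfolding Pp_def by (rule degree_le) auto
  show "L + 2 \<le> degree (Pp \<Lambda>)"
    by (rule le_degree) (use coeff_Pp_top[of \<Lambda>] in simp)
qed

lemma Pp_nz: "Pp \<Lambda> \<noteq> 0"
  using coeff_Pp_top[of \<Lambda>] by auto

lemma lead_Pp: "lead_coeff (Pp \<Lambda>) = 1"
  using coeff_Pp_top[of \<Lambda>] by (simp add: degree_Pp)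

lemma pderiv_Pp:
  "pderiv (Pp \<Lambda>) = monom (of_nat (L+2)) (L+1) - monom 2 1 - monom (of_nat L) (L-1)
     + monom (2 * of_real (U/4) * of_nat (L+1)) L + monom (2 * of_real (U/4)) 0
     - monom (2 * \<i> * of_real \<Lambda> * of_nat (L+1)) L + monom (2 * \<i> * of_real \<Lambda>) 0"
  unfolding Pp_def by (simp add: pderiv_add pderiv_diff pderiv_monom mult.commute)

lemma wPd:
  "w * poly (pderiv (Pp \<Lambda>)) w =
     (of_nat L + 2) * w^2 * w^L - 2 * w^2 - of_nat L * w^L + 2 * of_real (U/4) * (of_nat L + 1) * w * w^L
     + 2 * of_real (U/4) * w - 2 * \<i> * of_real \<Lambda> * (of_nat L + 1) * w * w^L + 2 * \<i> * of_real \<Lambda> * w"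
proof -
  have e: "w * w ^ (L - 1) = w ^ L" using Lpos by (cases L) auto
  have e2: "w * w ^ (L + 1) = w^2 * w^L" by (simp add: power2_eq_square)
  show ?thesis unfolding pderiv_Pp poly_add poly_diff poly_monom distrib_left right_diff_distrib
    by (simp only: e e2 mult.left_commute[of w] power_one_right power_0 mult_1_right) (simp add: algebra_simps power2_eq_square)
qed

lemma Pd_alg:
  fixes w y c d n :: complex
  shows "(y - 1) * ((n+2) * w^2 * y - 2*w^2 - n* y + 2*c*(n+1)*w* y + 2*c*w - 2*\<i>*d*(n+1)*w* y + 2*\<i>*d*w)
     = (y-1)^2*(w^2+1) - 4*c*n* y*w + (y - 1 + n* y)*((w^2-1)*(y-1) + 2*c*w*(y+1) - 2*\<i>*d*w*(y-1))"
  by algebra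

lemma Pd_identity:
  "(w^L - 1) * (w * poly (pderiv (Pp \<Lambda>)) w) =
     (w^L - 1)^2 * (w^2 + 1) - 4 * of_real (U/4) * of_nat L * w^L * w + (w^L - 1 + of_nat L * w^L) * Pf L (U/4) \<Lambda> w"
  unfolding wPd Pf_def by (rule Pd_alg)

end

lemma Pf_sym:
  fixes y :: complex
  assumes "y \<noteq> 0"
  shows "Pf L u \<Lambda> (inverse (cnj y)) * (cnj y)^L * (cnj y)^2 = cnj (Pf L u \<Lambda> y)"
proof -
  define c where "c = cnj y"
  have c0: "c \<noteq> 0" using assms by (simp add: c_def)
  define a where "a = c ^ L"
  have a0: "a \<noteq> 0" using c0 by (simp add: a_def)
  have ia: "inverse c ^ L = inverse a" by (simp add: a_def power_inverse)
  have "cnj (Pf L u \<Lambda> y) = (c^2 - 1) * (a - 1) + 2 * complex_of_real u * c * (a + 1)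
      + 2 * \<i> * complex_of_real \<Lambda> * c * (a - 1)"
    by (simp add: Pf_def c_def a_def)
  moreover have "Pf L u \<Lambda> (inverse c) * a * c^2 = (c^2 - 1) * (a - 1) + 2 * complex_of_real u * c * (a + 1)
      + 2 * \<i> * complex_of_real \<Lambda> * c * (a - 1)"
    unfolding Pf_def ia using a0 c0 by (simp add: field_simps power2_eq_square)
  ultimately show ?thesis by (simp add: c_def a_def)
qed

lemma Pf_sym_root:
  assumes "Pf L u \<Lambda> y = 0" "y \<noteq> 0"
  shows "Pf L u \<Lambda> (inverse (cnj y)) = 0"
  using Pf_sym[OF assms(2), of L u \<Lambda>] assms by simp

lemma Pf_zero: "0 < L \<Longrightarrow> Pf L u \<Lambda> 0 = 1"
  by (simp add: Pf_def)

context lw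
begin

definition Zs :: "real \<Rightarrow> complex set" where
  "Zs \<Lambda> = (\<lambda>l. cis (real_momentum L U l \<Lambda>)) ` {1..L}"

lemma w_pos: "0 < 2 * pi / real L" using Lpos by simp

lemma rm_range:
  assumes "l \<in> {1..L}"
  shows "0 < real_momentum L U l \<Lambda> \<and> real_momentum L U l \<Lambda> < 2 * pi"
proof -
  have k: "real_momentum L U l \<Lambda> \<in> Iv l" using rm_prop[OF assms] by blast
  have "0 \<le> (real l - 1) * (2 * pi / real L)" using assms w_pos by auto
  moreover have "real l * (2 * pi / real L) \<le> real L * (2 * pi / real L)"
    using assms w_pos by (intro mult_right_mono) auto
  moreover have "real L * (2 * pi / real L) = 2 * pi" using Lpos by simp
  ultimately show ?thesis using k unfolding Iv_def by auto
qed

lemma Iv_disj: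
  assumes "k \<in> Iv l" "k \<in> Iv m"
  shows "l = m"
proof -
  define w where "w = 2 * pi / real L"
  have w0: "0 < w" unfolding w_def by (rule w_pos)
  have Ie: "\<And>l. Iv l = {(real l - 1) * w <..< real l * w}" by (simp add: Iv_def w_def)
  from assms have "(real l - 1) * w < real m * w" "(real m - 1) * w < real l * w"
    unfolding Ie by auto
  then have "real l - 1 < real m" "real m - 1 < real l"
    using w0 by (simp_all add: mult_less_cancel_right)
  then show ?thesis by linarith
qed

lemma rm_inj:
  assumes "l \<in> {1..L}" "m \<in> {1..L}" "real_momentum L U l \<Lambda> = real_momentum L U m \<Lambda>"
  shows "l = m"
  using rm_prop[OF assms(1), of \<Lambda>] rm_prop[OF assms(2), of \<Lambda>] assms(3) Iv_disj by metis

lemma inj_Zs: "inj_on (\<lambda>l. cis (real_momentum L U l \<Lambda>)) {1..L}"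
proof (rule inj_onI)
  fix l m assume lm: "l \<in> {1..L}" "m \<in> {1..L}"
    "cis (real_momentum L U l \<Lambda>) = cis (real_momentum L U m \<Lambda>)"
  then have "real_momentum L U l \<Lambda> = real_momentum L U m \<Lambda>"
    using rm_range[OF lm(1), of \<Lambda>] rm_range[OF lm(2), of \<Lambda>] lm(3) by (intro cis_inj02) auto
  then show "l = m" using rm_inj lm by blast
qed

lemma card_Zs: "card (Zs \<Lambda>) = L"
  unfolding Zs_def using card_image[OF inj_Zs] by simp

lemma finite_Zs: "finite (Zs \<Lambda>)"
  unfolding Zs_def by simp

lemma Zs_norm: "x \<in> Zs \<Lambda> \<Longrightarrow> cmod x = 1"
  unfolding Zs_def by auto

lemma Pf_rm:
  assumes "l \<in> {1..L}"
  shows "Pf L (U/4) \<Lambda> (cis (real_momentum L U l \<Lambda>)) = 0"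
proof -
  let ?k = "real_momentum L U l \<Lambda>"
  have k: "?k \<in> Iv l" "hk ?k = \<Lambda>" using rm_prop[OF assms] by auto
  have z: "\<Lambda> - sin ?k + U / 4 * cot (?k * real L / 2) = 0" using k(2) unfolding hk_def by simp
  show ?thesis unfolding Pf_cis[OF Iv_sin_ne[OF k(1)]] z by simp
qed

lemma Pf_Zs: "x \<in> Zs \<Lambda> \<Longrightarrow> Pf L (U/4) \<Lambda> x = 0"
  unfolding Zs_def using Pf_rm by auto

lemma locate:
  assumes "0 \<le> k" "k < 2 * pi" "sin (k * real L / 2) \<noteq> 0"
  shows "\<exists>l\<in>{1..L}. k \<in> Iv l"
proof -
  define x where "x = k * real L / (2 * pi)"
  define n where "n = floor x"
  have x0: "0 \<le> x" using assms Lpos by (simp add: x_def)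
  have xL: "x < real L" using assms Lpos by (simp add: x_def field_simps)
  have n1: "of_int n \<le> x" "x < of_int n + 1" unfolding n_def by linarith+
  have n0: "0 \<le> n" using x0 unfolding n_def by simp
  have nL: "n < int L" using n1 xL by linarith
  have nx: "of_int n \<noteq> x"
  proof
    assume "of_int n = x"
    then have "k * real L / 2 = of_int n * pi" by (simp add: x_def field_simps)
    then show False using assms(3) by (simp add: sin_zero_iff_int2)
  qed
  define l where "l = nat n + 1"
  have rl: "real l - 1 = of_int n" using n0 by (simp add: l_def)
  have rl2: "real l = of_int n + 1" using n0 by (simp add: l_def)
  have "of_int n < x" using n1 nx by linarith
  then have "(real l - 1) * (2 * pi / real L) < k"
    unfolding rl x_def using Lpos by (simp add: field_simps)
  moreover have "k < real l * (2 * pi / real L)"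
    using n1(2) unfolding rl2 x_def using Lpos by (simp add: field_simps)
  moreover have "l \<in> {1..L}" using n0 nL by (auto simp: l_def)
  ultimately show ?thesis unfolding Iv_def by auto
qed

lemma circle_root:
  assumes "cmod y = 1" "Pf L (U/4) \<Lambda> y = 0"
  shows "y \<in> Zs \<Lambda>"
proof -
  obtain k where k: "0 \<le> k" "k < 2 * pi" "y = cis k" using cis_surj02[OF assms(1)] by blast
  show ?thesis
  proof (cases "sin (k * real L / 2) = 0")
    case True
    then obtain i :: int where i: "k * real L / 2 = of_int i * pi" by (auto simp: sin_zero_iff_int2)
    have "y ^ L = cis (real L * k)" unfolding k(3) Complex.DeMoivre ..
    also have "real L * k = 2 * pi * of_int i" using i by (simp add: field_simps)
    also have "cis (2 * pi * of_int i) = 1" by simp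
    finally have yL: "y ^ L = 1" .
    have "Pf L (U/4) \<Lambda> y = U * y" unfolding Pf_def yL by simp
    moreover have "y \<noteq> 0" using assms(1) by auto
    ultimately show ?thesis using assms(2) Upos by simp
  next
    case False
    obtain l where l: "l \<in> {1..L}" "k \<in> Iv l" using locate[OF k(1,2) False] by blast
    have c1: "cis (k * real L) - 1 \<noteq> 0"
    proof
      assume "cis (k * real L) - 1 = 0"
      then have "(cis (2 * (k * real L / 2)) - 1)\<^sup>2 = 0" by simp
      then show False unfolding cis_double_sq using False by simp
    qed
    define X where "X = \<Lambda> - sin k + U / 4 * cot (k * real L / 2)"
    have "Pf L (U/4) \<Lambda> (cis k) = -2 * \<i> * cis k * (cis (k * real L) - 1) * complex_of_real X"
      unfolding X_def by (rule Pf_cis[OF False])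
    then have "-2 * \<i> * cis k * (cis (k * real L) - 1) * complex_of_real X = 0"
      using assms(2) k(3) by simp
    then have "complex_of_real X = 0" using c1 by (simp only: mult_eq_0_iff) auto
    then have "X = 0" by simp
    then have "hk k = \<Lambda>" unfolding hk_def X_def by simp
    then have "real_momentum L U l \<Lambda> = k" using rm_unique[OF l(1,2)] by simp
    then show ?thesis unfolding Zs_def k(3) using l(1) by force
  qed
qed

lemma Pd_nz:
  assumes "l \<in> {1..L}"
  shows "poly (pderiv (Pp \<Lambda>)) (cis (real_momentum L U l \<Lambda>)) \<noteq> 0"
proof
  let ?k = "real_momentum L U l \<Lambda>"
  define t where "t = ?k * real L / 2"
  assume P0: "poly (pderiv (Pp \<Lambda>)) (cis ?k) = 0"
  have st: "sin t \<noteq> 0" unfolding t_def using Iv_sin_ne rm_prop[OF assms] by blast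
  have wL: "cis ?k ^ L = cis (2 * t)" unfolding t_def Complex.DeMoivre by (simp add: field_simps)
  have Pf0: "Pf L (U/4) \<Lambda> (cis ?k) = 0" by (rule Pf_rm[OF assms])
  have "(cis ?k ^ L - 1) * (cis ?k * poly (pderiv (Pp \<Lambda>)) (cis ?k)) =
     (cis ?k ^ L - 1)^2 * ((cis ?k)^2 + 1) - 4 * of_real (U/4) * of_nat L * cis ?k ^ L * cis ?k
       + (cis ?k ^ L - 1 + of_nat L * cis ?k ^ L) * Pf L (U/4) \<Lambda> (cis ?k)"
    by (rule Pd_identity)
  then have "(cis ?k ^ L - 1)^2 * ((cis ?k)^2 + 1) - 4 * of_real (U/4) * of_nat L * cis ?k ^ L * cis ?k = 0"
    unfolding P0 Pf0 by simp
  then have "- 4 * complex_of_real ((sin t)\<^sup>2) * cis (2 * t) * (complex_of_real (2 * cos ?k) * cis ?k)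
       - 4 * of_real (U/4) * of_nat L * cis (2 * t) * cis ?k = 0"
    unfolding wL cis_double_sq cis_sq_plus1 .
  moreover have "- 4 * complex_of_real ((sin t)\<^sup>2) * cis (2 * t) * (complex_of_real (2 * cos ?k) * cis ?k)
       - 4 * of_real (U/4) * of_nat L * cis (2 * t) * cis ?k
     = cis (2 * t) * cis ?k * (- 4) * complex_of_real (2 * (sin t)\<^sup>2 * cos ?k + U / 4 * real L)"
    by (simp add: algebra_simps)
  ultimately have "cis (2 * t) * cis ?k * (- 4) * complex_of_real (2 * (sin t)\<^sup>2 * cos ?k + U / 4 * real L) = 0"
    by simp
  then have "complex_of_real (2 * (sin t)\<^sup>2 * cos ?k + U / 4 * real L) = 0"
    by (simp only: mult_eq_0_iff) auto
  then have eq: "2 * (sin t)\<^sup>2 * cos ?k + U / 4 * real L = 0"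
    by (simp only: of_real_eq_0_iff)
  have "\<bar>(sin t)\<^sup>2 * cos ?k\<bar> \<le> 1"
    by (simp add: abs_mult abs_square_le_1 mult_le_one)
  then have "- 1 \<le> (sin t)\<^sup>2 * cos ?k" by linarith
  moreover have "U / 4 * real L > 2" using big by simp
  ultimately show False using eq by linarith
qed

end

context lw
begin

lemma Pd_zero_double:
  fixes a :: complex and h :: "complex poly"
  shows "poly (pderiv ([:-a, 1:] * ([:-a, 1:] * h))) a = 0"
  unfolding pderiv_mult poly_add poly_mult by simp

lemma factor:
  "\<exists>z. 1 < cmod z \<and> (\<forall>y. Pf L (U/4) \<Lambda> y = (\<Prod>x\<in>Zs \<Lambda>. (y - x)) * ((y - z) * (y - inverse (cnj z))))"
proof -
  define R where "R = (\<Prod>x\<in>Zs \<Lambda>. [:-x, 1:])"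
  have "R dvd Pp \<Lambda>"
    unfolding R_def by (rule prod_dvd_roots) (auto simp: finite_Zs poly_Pp Pf_Zs)
  then obtain Q where PQ: "Pp \<Lambda> = R * Q" by (elim dvdE)
  have R0: "R \<noteq> 0" unfolding R_def by (simp add: finite_Zs)
  have Q0: "Q \<noteq> 0" using PQ Pp_nz[of \<Lambda>] by auto
  have degR: "degree R = L"
    unfolding R_def by (subst degree_prod_sum_eq) (auto simp: card_Zs)
  have leadR: "lead_coeff R = 1"
    unfolding R_def by (simp add: lead_coeff_prod)
  have degQ: "degree Q = 2"
    using degree_mult_eq[OF R0 Q0] PQ degree_Pp[of \<Lambda>] degR by simp
  have leadQ: "lead_coeff Q = 1"
    using lead_coeff_mult[of R Q] PQ lead_Pp[of \<Lambda>] leadR by simp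
  define b where "b = coeff Q 1"
  define c where "c = coeff Q 0"
  have polyQ: "poly Q y = c + b * y + y^2" for y
    unfolding poly_altdef degQ using leadQ degQ
    by (simp add: b_def c_def numeral_2_eq_2 atMost_Suc)
  define r1 where "r1 = (- b + csqrt (b^2 - 4 * c)) / 2"
  define r2 where "r2 = (- b - csqrt (b^2 - 4 * c)) / 2"
  have polyQ2: "poly Q y = (y - r1) * (y - r2)" for y
  proof -
    have "(y - r1) * (y - r2) = y^2 + b * y + ((b^2 - (csqrt (b^2 - 4 * c))^2) / 4)"
      unfolding r1_def r2_def by (simp add: field_simps power2_eq_square)
    also have "\<dots> = c + b * y + y^2" by (simp add: field_simps)
    finally show ?thesis using polyQ by simp
  qed
  have Qeq: "Q = [:-r1, 1:] * [:-r2, 1:]"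
  proof -
    have "poly Q = poly ([:-r1, 1:] * [:-r2, 1:])"
      by (rule ext) (simp add: polyQ2 algebra_simps)
    then show ?thesis by (simp add: poly_eq_poly_eq_iff)
  qed
  have PF: "Pf L (U/4) \<Lambda> y = (\<Prod>x\<in>Zs \<Lambda>. (y - x)) * ((y - r1) * (y - r2))" for y
    unfolding poly_Pp[symmetric] PQ poly_mult polyQ2 R_def poly_prod by simp
  have roots: "Pf L (U/4) \<Lambda> y = 0 \<longleftrightarrow> y \<in> Zs \<Lambda> \<or> y = r1 \<or> y = r2" for y
    unfolding PF by (auto simp: finite_Zs)
  have notZ: "r \<notin> Zs \<Lambda>" if r: "r = r1 \<or> r = r2" for r
  proof
    assume rZ: "r \<in> Zs \<Lambda>"
    then obtain l where l: "l \<in> {1..L}" "r = cis (real_momentum L U l \<Lambda>)" unfolding Zs_def by auto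
    define r' where "r' = (if r = r1 then r2 else r1)"
    have Qr: "Q = [:-r, 1:] * [:-r', 1:]" using r unfolding Qeq r'_def by (auto simp: mult.commute)
    define R' where "R' = (\<Prod>x\<in>Zs \<Lambda> - {r}. [:-x, 1:])"
    have Re: "R = [:-r, 1:] * R'"
      unfolding R_def R'_def using rZ by (simp add: finite_Zs prod.remove)
    have "Pp \<Lambda> = [:-r, 1:] * ([:-r, 1:] * (R' * [:-r', 1:]))"
      unfolding PQ Qr Re by (simp only: mult_ac)
    then have "poly (pderiv (Pp \<Lambda>)) r = 0" using Pd_zero_double by simp
    then show False using Pd_nz[OF l(1)] l(2) by simp
  qed
  have norm_ne: "cmod r \<noteq> 1" if r: "r = r1 \<or> r = r2" for r
  proof
    assume "cmod r = 1"
    moreover have "Pf L (U/4) \<Lambda> r = 0" using roots r by auto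
    ultimately have "r \<in> Zs \<Lambda>" by (rule circle_root)
    then show False using notZ r by blast
  qed
  have r1_0: "r1 \<noteq> 0"
  proof
    assume "r1 = 0"
    then have "Pf L (U/4) \<Lambda> 0 = 0" using roots by auto
    then show False using Pf_zero[OF Lpos] by simp
  qed
  have "Pf L (U/4) \<Lambda> (inverse (cnj r1)) = 0"
    by (rule Pf_sym_root) (use roots r1_0 in auto)
  then have "inverse (cnj r1) \<in> Zs \<Lambda> \<or> inverse (cnj r1) = r1 \<or> inverse (cnj r1) = r2"
    using roots by blast
  moreover have "inverse (cnj r1) \<notin> Zs \<Lambda>"
  proof
    assume "inverse (cnj r1) \<in> Zs \<Lambda>"
    then have "cmod (inverse (cnj r1)) = 1" by (rule Zs_norm)
    then have "cmod r1 = 1" by (simp add: norm_inverse)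
    then show False using norm_ne by blast
  qed
  moreover have "inverse (cnj r1) \<noteq> r1"
  proof
    assume "inverse (cnj r1) = r1"
    then have "cmod r1 = inverse (cmod r1)" by (metis complex_mod_cnj norm_inverse)
    then have "cmod r1 * cmod r1 = 1" using r1_0 by (simp add: field_simps)
    then have "cmod r1 = 1" by (metis norm_ge_zero mult_cancel_left1 abs_of_nonneg power2_eq_square real_sqrt_abs real_sqrt_one)
    then show False using norm_ne by blast
  qed
  ultimately have r2e: "r2 = inverse (cnj r1)" by blast
  show ?thesis
  proof (cases "1 < cmod r1")
    case True
    then show ?thesis using PF r2e by blast
  next
    case False
    then have "cmod r1 < 1" using norm_ne by force
    then have "1 < cmod r2" unfolding r2e using r1_0 by (simp add: norm_inverse one_less_inverse)
    moreover have "r1 = inverse (cnj r2)" unfolding r2e by simp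
    ultimately show ?thesis using PF by (intro exI[of _ r2]) (auto simp: mult.commute)
  qed
qed

end

lemma cis_prod: "(\<Prod>i\<in>A. cis (f i)) = cis (\<Sum>i\<in>A. f i)"
  by (induction A rule: infinite_finite_induct) (auto simp: cis_mult)

lemma exp_k1: "exp (\<i> * Complex q (- \<xi>)) = complex_of_real (exp \<xi>) * cis q"
  by (subst exp_eq_polar) (simp add: exp_of_real)

lemma exp_k2: "exp (\<i> * Complex q \<xi>) = complex_of_real (exp (- \<xi>)) * cis q"
  by (subst exp_eq_polar) (simp add: exp_of_real)

lemma exp_k3: "exp (\<i> * complex_of_real k) = cis k"
  by (simp add: cis_conv_exp)

context lw
begin

definition z0 :: "real \<Rightarrow> complex" where
  "z0 \<Lambda> = (SOME z. 1 < cmod z \<and>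
     (\<forall>y. Pf L (U/4) \<Lambda> y = (\<Prod>x\<in>Zs \<Lambda>. (y - x)) * ((y - z) * (y - inverse (cnj z)))))"

lemma z0_prop:
  "1 < cmod (z0 \<Lambda>) \<and>
   (\<forall>y. Pf L (U/4) \<Lambda> y = (\<Prod>x\<in>Zs \<Lambda>. (y - x)) * ((y - z0 \<Lambda>) * (y - inverse (cnj (z0 \<Lambda>)))))"
  unfolding z0_def by (rule someI_ex[OF factor])

lemma z0_norm: "1 < cmod (z0 \<Lambda>)" using z0_prop by blast

lemma z0_nz: "z0 \<Lambda> \<noteq> 0"
proof
  assume "z0 \<Lambda> = 0"
  with z0_norm[of \<Lambda>] show False by simp
qed

lemma z0_fact: "Pf L (U/4) \<Lambda> y = (\<Prod>x\<in>Zs \<Lambda>. (y - x)) * ((y - z0 \<Lambda>) * (y - inverse (cnj (z0 \<Lambda>))))"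
  using z0_prop by blast

lemma z0_root: "Pf L (U/4) \<Lambda> (z0 \<Lambda>) = 0" "Pf L (U/4) \<Lambda> (inverse (cnj (z0 \<Lambda>))) = 0"
  by (simp_all add: z0_fact)

lemma z0_unique:
  assumes "1 < cmod y" "Pf L (U/4) \<Lambda> y = 0"
  shows "y = z0 \<Lambda>"
proof -
  have "(\<Prod>x\<in>Zs \<Lambda>. (y - x)) = 0 \<or> y = z0 \<Lambda> \<or> y = inverse (cnj (z0 \<Lambda>))"
    using assms(2) unfolding z0_fact by auto
  moreover have "(\<Prod>x\<in>Zs \<Lambda>. (y - x)) \<noteq> 0"
  proof
    assume "(\<Prod>x\<in>Zs \<Lambda>. (y - x)) = 0"
    then have "y \<in> Zs \<Lambda>" using finite_Zs by auto
    then show False using Zs_norm assms(1) by force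
  qed
  moreover have "y \<noteq> inverse (cnj (z0 \<Lambda>))"
  proof
    assume "y = inverse (cnj (z0 \<Lambda>))"
    then have "cmod y = inverse (cmod (z0 \<Lambda>))" by (simp add: norm_inverse)
    moreover have "inverse (cmod (z0 \<Lambda>)) < 1" using z0_norm[of \<Lambda>] by (simp add: inverse_less_1_iff)
    ultimately show False using assms(1) by simp
  qed
  ultimately show ?thesis by blast
qed

lemma prod_Zs: "(\<Prod>x\<in>Zs \<Lambda>. x) = cis (\<Sum>l\<in>{1..L}. real_momentum L U l \<Lambda>)"
  unfolding Zs_def using prod.reindex[OF inj_Zs, of "\<lambda>x. x" \<Lambda>] by (simp add: cis_prod)

lemma prod_rel:
  "z0 \<Lambda> * inverse (cnj (z0 \<Lambda>)) * (-1)^L * cis (\<Sum>l\<in>{1..L}. real_momentum L U l \<Lambda>) = 1"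
proof -
  have "1 = Pf L (U/4) \<Lambda> 0" using Pf_zero[OF Lpos] by simp
  also have "\<dots> = (\<Prod>x\<in>Zs \<Lambda>. - x) * (z0 \<Lambda> * inverse (cnj (z0 \<Lambda>)))"
    unfolding z0_fact by simp
  also have "(\<Prod>x\<in>Zs \<Lambda>. - x) = (-1)^L * (\<Prod>x\<in>Zs \<Lambda>. x)"
    by (simp add: prod_uminus card_Zs)
  finally show ?thesis unfolding prod_Zs by (simp add: mult_ac)
qed

definition qs :: "real \<Rightarrow> real" where
  "qs \<Lambda> = (SOME q. 0 \<le> q \<and> q < 2 * pi \<and> cis q = sgn (z0 \<Lambda>))"

definition xs :: "real \<Rightarrow> real" where
  "xs \<Lambda> = ln (cmod (z0 \<Lambda>))"

lemma qs_prop: "0 \<le> qs \<Lambda> \<and> qs \<Lambda> < 2 * pi \<and> cis (qs \<Lambda>) = sgn (z0 \<Lambda>)"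
proof -
  have "cmod (sgn (z0 \<Lambda>)) = 1" using z0_nz by (simp add: norm_sgn)
  then obtain q0 where q0: "0 \<le> q0" "q0 < 2 * pi" "sgn (z0 \<Lambda>) = cis q0" using cis_surj02 by blast
  show ?thesis unfolding qs_def
    by (rule someI[where P = "\<lambda>q. 0 \<le> q \<and> q < 2 * pi \<and> cis q = sgn (z0 \<Lambda>)" and x = q0]) (use q0 in auto)
qed

lemma xs_pos: "0 < xs \<Lambda>"
  unfolding xs_def by (rule ln_gt_zero[OF z0_norm])

lemma z0_polar: "z0 \<Lambda> = complex_of_real (exp (xs \<Lambda>)) * cis (qs \<Lambda>)"
proof -
  have e: "exp (xs \<Lambda>) = cmod (z0 \<Lambda>)" unfolding xs_def using z0_nz[of \<Lambda>] by simp
  have n: "complex_of_real (cmod (z0 \<Lambda>)) \<noteq> 0" using z0_norm[of \<Lambda>] by (auto simp del: norm_eq_zero)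
  have "complex_of_real (exp (xs \<Lambda>)) * cis (qs \<Lambda>) =
        complex_of_real (cmod (z0 \<Lambda>)) * (z0 \<Lambda> / complex_of_real (cmod (z0 \<Lambda>)))"
    unfolding e using qs_prop[of \<Lambda>] by (simp only: sgn_eq)
  also have "\<dots> = z0 \<Lambda>" using n by simp
  finally show ?thesis ..
qed

lemma z0_ratio: "z0 \<Lambda> * inverse (cnj (z0 \<Lambda>)) = cis (2 * qs \<Lambda>)"
proof -
  have e0: "exp (xs \<Lambda>) \<noteq> 0" by simp
  show ?thesis
    unfolding z0_polar cis_cnj complex_cnj_mult complex_cnj_complex_of_real
    using e0 by (simp add: cis_mult field_simps)
qed

lemma polar_unique:
  assumes "0 \<le> q" "q < 2 * pi" "complex_of_real (exp \<xi>) * cis q = z0 \<Lambda>"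
  shows "q = qs \<Lambda>" "\<xi> = xs \<Lambda>"
proof -
  have "cmod (z0 \<Lambda>) = exp \<xi>" using assms(3)[symmetric] by (simp add: norm_mult)
  then show "\<xi> = xs \<Lambda>" unfolding xs_def by simp
  have "sgn (z0 \<Lambda>) = cis q" unfolding assms(3)[symmetric]
    by (simp add: sgn_mult sgn_of_real)
  then have "cis q = cis (qs \<Lambda>)" using qs_prop by simp
  then show "q = qs \<Lambda>" using cis_inj02 assms(1,2) qs_prop by blast
qed

lemma sol_iff:
  "(q, \<xi>, k3, \<Lambda>) \<in> string_solutions L U \<longleftrightarrow>
     0 \<le> q \<and> q < 2 * pi \<and> 0 < \<xi> \<and> 0 \<le> k3 \<and> k3 < 2 * pi \<and>
     Pf L (U/4) \<Lambda> (complex_of_real (exp \<xi>) * cis q) = 0 \<and>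
     Pf L (U/4) \<Lambda> (complex_of_real (exp (- \<xi>)) * cis q) = 0 \<and>
     Pf L (U/4) \<Lambda> (cis k3) = 0 \<and> cis ((2 * q + k3) * real L) = 1"
proof -
  have U0: "U \<noteq> 0" using Upos by simp
  let ?k1 = "Complex q (- \<xi>)" and ?k2 = "Complex q \<xi>" and ?k3 = "complex_of_real k3"
  have th: "exp (\<i> * k * of_nat L) = lw_theta U \<Lambda> k \<longleftrightarrow> Pf L (U/4) \<Lambda> (exp (\<i> * k)) = 0" for k
    by (rule lw_iff_Pf[OF U0])
  have sum: "\<i> * ?k1 * of_nat L + \<i> * ?k2 * of_nat L + \<i> * ?k3 * of_nat L
      = \<i> * complex_of_real ((2 * q + k3) * real L)"
    by (simp add: complex_eq_iff algebra_simps)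
  have prod: "exp (\<i> * ?k1 * of_nat L) * exp (\<i> * ?k2 * of_nat L) * exp (\<i> * ?k3 * of_nat L)
      = cis ((2 * q + k3) * real L)"
    unfolding mult_exp_exp sum cis_conv_exp ..
  show ?thesis
    unfolding string_solutions_def lieb_wu3_def
    using th[of ?k1] th[of ?k2] th[of ?k3] prod
    by (auto simp: exp_k1 exp_k2 exp_k3)
qed

end

lemma cis_eq_iff_int: "cis a = cis b \<longleftrightarrow> (\<exists>n::int. a = b + 2 * pi * of_int n)"
proof -
  have "cis a = cis b \<longleftrightarrow> sin a = sin b \<and> cos a = cos b" by (simp add: complex_eq_iff conj_commute)
  then show ?thesis by (simp add: sin_cos_eq_iff)
qed

lemma neg1_pow_pow: "((-1::complex)^L)^L = (-1)^L"
  by (cases "even L") simp_all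

context lw
begin

definition Sg :: "nat \<Rightarrow> real \<Rightarrow> real" where
  "Sg l \<Lambda> = (\<Sum>m\<in>{1..L} - {l}. real_momentum L U m \<Lambda>)"

lemma Sl_eq:
  assumes l: "l \<in> {1..L}"
  shows "{(q, \<xi>, k3, \<Lambda>) \<in> string_solutions L U. k3 = real_momentum L U l \<Lambda>} =
         (\<lambda>\<Lambda>. (qs \<Lambda>, xs \<Lambda>, real_momentum L U l \<Lambda>, \<Lambda>)) `
           {\<Lambda>. cis ((2 * qs \<Lambda> + real_momentum L U l \<Lambda>) * real L) = 1}"
proof (rule set_eqI)
  fix s :: "real \<times> real \<times> real \<times> real"
  obtain q \<xi> k3 \<Lambda> where s: "s = (q, \<xi>, k3, \<Lambda>)" by (cases s) auto
  have inv: "complex_of_real (exp (- xs \<Lambda>)) * cis (qs \<Lambda>) = inverse (cnj (z0 \<Lambda>))" for \<Lambda>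
    unfolding z0_polar by (simp add: cis_cnj exp_minus)
  show "s \<in> {(q, \<xi>, k3, \<Lambda>) \<in> string_solutions L U. k3 = real_momentum L U l \<Lambda>} \<longleftrightarrow>
        s \<in> (\<lambda>\<Lambda>. (qs \<Lambda>, xs \<Lambda>, real_momentum L U l \<Lambda>, \<Lambda>)) `
           {\<Lambda>. cis ((2 * qs \<Lambda> + real_momentum L U l \<Lambda>) * real L) = 1}"
  proof
    assume "s \<in> {(q, \<xi>, k3, \<Lambda>) \<in> string_solutions L U. k3 = real_momentum L U l \<Lambda>}"
    then have sol: "(q, \<xi>, k3, \<Lambda>) \<in> string_solutions L U" and k3: "k3 = real_momentum L U l \<Lambda>"
      unfolding s by auto
    note S = sol[unfolded sol_iff]
    have "1 < cmod (complex_of_real (exp \<xi>) * cis q)" using S by (simp add: norm_mult)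
    then have "complex_of_real (exp \<xi>) * cis q = z0 \<Lambda>" using S by (intro z0_unique) auto
    then have "q = qs \<Lambda>" "\<xi> = xs \<Lambda>" using polar_unique S by auto
    then show "s \<in> (\<lambda>\<Lambda>. (qs \<Lambda>, xs \<Lambda>, real_momentum L U l \<Lambda>, \<Lambda>)) `
           {\<Lambda>. cis ((2 * qs \<Lambda> + real_momentum L U l \<Lambda>) * real L) = 1}"
      using S k3 unfolding s by auto
  next
    assume "s \<in> (\<lambda>\<Lambda>. (qs \<Lambda>, xs \<Lambda>, real_momentum L U l \<Lambda>, \<Lambda>)) `
           {\<Lambda>. cis ((2 * qs \<Lambda> + real_momentum L U l \<Lambda>) * real L) = 1}"
    then obtain \<Lambda>' where s': "s = (qs \<Lambda>', xs \<Lambda>', real_momentum L U l \<Lambda>', \<Lambda>')"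
      and c: "cis ((2 * qs \<Lambda>' + real_momentum L U l \<Lambda>') * real L) = 1" by auto
    have "(qs \<Lambda>', xs \<Lambda>', real_momentum L U l \<Lambda>', \<Lambda>') \<in> string_solutions L U"
      unfolding sol_iff using qs_prop[of \<Lambda>'] xs_pos[of \<Lambda>'] rm_range[OF l, of \<Lambda>'] c
        z0_root[of \<Lambda>'] Pf_rm[OF l, of \<Lambda>'] z0_polar[of \<Lambda>'] inv[of \<Lambda>']
      by auto
    then show "s \<in> {(q, \<xi>, k3, \<Lambda>) \<in> string_solutions L U. k3 = real_momentum L U l \<Lambda>}"
      unfolding s' by auto
  qed
qed

lemma Sl_inj: "inj_on (\<lambda>\<Lambda>. (qs \<Lambda>, xs \<Lambda>, real_momentum L U l \<Lambda>, \<Lambda>)) A"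
  by (rule inj_onI) auto

lemma cond_iff:
  assumes l: "l \<in> {1..L}"
  shows "cis ((2 * qs \<Lambda> + real_momentum L U l \<Lambda>) * real L) = 1 \<longleftrightarrow>
         (\<exists>n::int. real L * Sg l \<Lambda> = real L * pi + 2 * pi * of_int n)"
proof -
  let ?r = "real_momentum L U l \<Lambda>"
  have sum: "(\<Sum>m\<in>{1..L}. real_momentum L U m \<Lambda>) = ?r + Sg l \<Lambda>"
    unfolding Sg_def using l by (simp add: sum.remove)
  have P: "cis (2 * qs \<Lambda>) * (-1)^L * (cis ?r * cis (Sg l \<Lambda>)) = 1"
    using prod_rel[of \<Lambda>] unfolding z0_ratio sum by (simp add: cis_mult)
  have a: "cis (2 * qs \<Lambda> + ?r) = (-1)^L * cis (- Sg l \<Lambda>)"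
  proof -
    have "cis (2 * qs \<Lambda> + ?r) = cis (2 * qs \<Lambda> + ?r) * ((-1)^L * cis (Sg l \<Lambda>)) * ((-1)^L * cis (- Sg l \<Lambda>))"
      by (simp add: cis_mult mult_ac power_mult_distrib[symmetric])
    also have "cis (2 * qs \<Lambda> + ?r) * ((-1)^L * cis (Sg l \<Lambda>)) = 1"
      using P by (simp add: cis_mult[symmetric] mult_ac)
    finally show ?thesis by simp
  qed
  have b: "cis ((2 * qs \<Lambda> + ?r) * real L) = (-1)^L * cis (- (real L * Sg l \<Lambda>))"
  proof -
    have "cis ((2 * qs \<Lambda> + ?r) * real L) = cis (2 * qs \<Lambda> + ?r) ^ L"
      by (simp add: Complex.DeMoivre mult.commute)
    also have "\<dots> = ((-1)^L)^L * cis (- Sg l \<Lambda>) ^ L" unfolding a by (simp add: power_mult_distrib)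
    also have "\<dots> = (-1)^L * cis (- (real L * Sg l \<Lambda>))"
      by (simp add: neg1_pow_pow Complex.DeMoivre)
    finally show ?thesis .
  qed
  have cpi: "cis (real L * pi) = (-1)^L" by (simp add: Complex.DeMoivre[symmetric])
  have "cis ((2 * qs \<Lambda> + ?r) * real L) = 1 \<longleftrightarrow> cis (real L * Sg l \<Lambda>) = cis (real L * pi)"
  proof -
    have "(-1::complex)^L * (-1)^L = 1" by (simp add: power_mult_distrib[symmetric])
    then have "(-1)^L * cis (- (real L * Sg l \<Lambda>)) = 1 \<longleftrightarrow> cis (real L * Sg l \<Lambda>) = (-1)^L"
      by (auto simp: cis_mult[symmetric] field_simps cis_inverse[symmetric])
    then show ?thesis unfolding b cpi .
  qed
  also have "\<dots> \<longleftrightarrow> (\<exists>n::int. real L * Sg l \<Lambda> = real L * pi + 2 * pi * of_int n)"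
    by (rule cis_eq_iff_int)
  finally show ?thesis .
qed

end

lemma count_hits:
  fixes T :: "real \<Rightarrow> real" and a b :: real
  assumes mono: "\<And>x y. x < y \<Longrightarrow> T x < T y"
    and cont: "\<And>x. isCont T x"
    and rng: "\<And>x. a < T x \<and> T x < b"
    and low: "\<And>t. a < t \<Longrightarrow> \<exists>x. T x < t"
    and high: "\<And>t. t < b \<Longrightarrow> \<exists>x. t < T x"
  shows "finite {x. \<exists>n::int. T x = of_int n} \<and>
         card {x. \<exists>n::int. T x = of_int n} = card {n::int. a < of_int n \<and> of_int n < b}"
proof -
  let ?E = "{x. \<exists>n::int. T x = of_int n}"
  let ?N = "{n::int. a < of_int n \<and> of_int n < b}"
  have inj: "inj T"
  proof (rule injI)
    fix x y assume "T x = T y"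
    then show "x = y" using mono[of x y] mono[of y x] by (cases x y rule: linorder_cases) auto
  qed
  have bij: "bij_betw (\<lambda>x. floor (T x)) ?E ?N"
  proof (rule bij_betw_imageI)
    show "inj_on (\<lambda>x. floor (T x)) ?E"
    proof (rule inj_onI)
      fix x y assume "x \<in> ?E" "y \<in> ?E" "floor (T x) = floor (T y)"
      then have "T x = T y" by auto
      then show "x = y" using inj by (simp add: inj_eq)
    qed
    show "(\<lambda>x. floor (T x)) ` ?E = ?N"
    proof
      show "(\<lambda>x. floor (T x)) ` ?E \<subseteq> ?N"
      proof
        fix y assume "y \<in> (\<lambda>x. floor (T x)) ` ?E"
        then obtain x n where xn: "T x = of_int n" "y = floor (T x)" by auto
        then show "y \<in> ?N" using rng[of x] by auto
      qed
      show "?N \<subseteq> (\<lambda>x. floor (T x)) ` ?E"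
      proof
        fix n assume n: "n \<in> ?N"
        then obtain x1 where x1: "T x1 < of_int n" using low by auto
        obtain x2 where x2: "of_int n < T x2" using high n by auto
        have "x1 \<le> x2"
        proof (rule ccontr)
          assume "\<not> x1 \<le> x2"
          then have "T x2 < T x1" using mono by simp
          then show False using x1 x2 by simp
        qed
        then obtain x where "x1 \<le> x" "x \<le> x2" "T x = of_int n"
          using IVT[of T x1 "of_int n" x2] x1 x2 cont by auto
        then show "n \<in> (\<lambda>x. floor (T x)) ` ?E" by (intro image_eqI[of _ _ x]) auto
      qed
    qed
  qed
  have finN: "finite ?N"
  proof (rule finite_subset)
    show "?N \<subseteq> {floor a .. ceiling b}"
      by (auto simp: floor_le_iff le_ceiling_iff intro: less_imp_le) 
    show "finite {floor a .. ceiling b}" by simp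
  qed
  have "finite ?E" using bij_betw_finite[OF bij] finN by simp
  moreover have "card ?E = card ?N" using bij_betw_same_card[OF bij] .
  ultimately show ?thesis by simp
qed

lemma int_count:
  fixes A :: int and L :: nat
  assumes "1 \<le> L"
  shows "card {n::int. 2 * A - int L < 2 * n \<and> 2 * n < 2 * A + int L - 2} = (if odd L then L - 1 else L - 2)"
proof (cases "odd L")
  case True
  then obtain j where j: "L = 2 * j + 1" using oddE by blast
  have "{n::int. 2 * A - int L < 2 * n \<and> 2 * n < 2 * A + int L - 2} = {A - int j .. A + int j - 1}"
    unfolding j by (auto; presburger)
  then show ?thesis using True j by simp
next
  case False
  then obtain j where j: "L = 2 * j" using evenE by blast
  have j1: "1 \<le> j" using assms j by simp
  have "{n::int. 2 * A - int L < 2 * n \<and> 2 * n < 2 * A + int L - 2} = {A - int j + 1 .. A + int j - 2}"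
    unfolding j by (auto; presburger)
  then show ?thesis using False j j1 by (simp add: nat_diff_distrib)
qed

context lw
begin

definition T :: "nat \<Rightarrow> real \<Rightarrow> real" where
  "T l \<Lambda> = real L * Sg l \<Lambda> / (2 * pi) - real L / 2"

lemma cond_iff_T:
  assumes l: "l \<in> {1..L}"
  shows "cis ((2 * qs \<Lambda> + real_momentum L U l \<Lambda>) * real L) = 1 \<longleftrightarrow> (\<exists>n::int. T l \<Lambda> = of_int n)"
proof -
  have "real L * Sg l \<Lambda> = real L * pi + 2 * pi * of_int n \<longleftrightarrow> T l \<Lambda> = of_int n" for n :: int
    unfolding T_def by (auto simp: field_simps)
  then show ?thesis using cond_iff[OF l] by simp
qed

lemma rm_low:
  assumes "0 < \<epsilon>"
  shows "\<exists>\<Lambda>. \<forall>m\<in>{1..L}. real_momentum L U m \<Lambda> < (real m - 1) * (2 * pi / real L) + \<epsilon>"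
proof -
  define w where "w = 2 * pi / real L"
  have w0: "0 < w" unfolding w_def by (rule w_pos)
  define d where "d = min \<epsilon> (w / 2)"
  have d0: "0 < d" "d \<le> \<epsilon>" "d < w" using assms w0 by (auto simp: d_def)
  define p where "p m = (real m - 1) * w + d" for m :: nat
  have pI: "p m \<in> Iv m" for m unfolding p_def Iv_def w_def[symmetric] using d0 by (auto simp: algebra_simps)
  define \<Lambda>0 where "\<Lambda>0 = - (\<Sum>m\<in>{1..L}. \<bar>hk (p m)\<bar>) - 1"
  have "real_momentum L U m \<Lambda>0 < (real m - 1) * w + \<epsilon>" if m: "m \<in> {1..L}" for m
  proof -
    have "\<bar>hk (p m)\<bar> \<le> (\<Sum>m\<in>{1..L}. \<bar>hk (p m)\<bar>)"
      by (rule member_le_sum[of m "{1..L}" "\<lambda>m. \<bar>hk (p m)\<bar>"]) (use m in auto)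
    then have "\<Lambda>0 < hk (p m)" unfolding \<Lambda>0_def by linarith
    then have "real_momentum L U m \<Lambda>0 < real_momentum L U m (hk (p m))" by (rule rm_mono[OF m])
    also have "real_momentum L U m (hk (p m)) = p m" by (rule rm_unique[OF m pI refl])
    finally show ?thesis using d0 unfolding p_def by linarith
  qed
  then show ?thesis unfolding w_def by blast
qed

lemma rm_high:
  assumes "0 < \<epsilon>"
  shows "\<exists>\<Lambda>. \<forall>m\<in>{1..L}. real m * (2 * pi / real L) - \<epsilon> < real_momentum L U m \<Lambda>"
proof -
  define w where "w = 2 * pi / real L"
  have w0: "0 < w" unfolding w_def by (rule w_pos)
  define d where "d = min \<epsilon> (w / 2)"
  have d0: "0 < d" "d \<le> \<epsilon>" "d < w" using assms w0 by (auto simp: d_def)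
  define p where "p m = real m * w - d" for m :: nat
  have pI: "p m \<in> Iv m" for m unfolding p_def Iv_def w_def[symmetric] using d0 by (auto simp: algebra_simps)
  define \<Lambda>0 where "\<Lambda>0 = (\<Sum>m\<in>{1..L}. \<bar>hk (p m)\<bar>) + 1"
  have "real m * w - \<epsilon> < real_momentum L U m \<Lambda>0" if m: "m \<in> {1..L}" for m
  proof -
    have "\<bar>hk (p m)\<bar> \<le> (\<Sum>m\<in>{1..L}. \<bar>hk (p m)\<bar>)"
      by (rule member_le_sum[of m "{1..L}" "\<lambda>m. \<bar>hk (p m)\<bar>"]) (use m in auto)
    then have "hk (p m) < \<Lambda>0" unfolding \<Lambda>0_def by linarith
    then have "real_momentum L U m (hk (p m)) < real_momentum L U m \<Lambda>0" by (rule rm_mono[OF m])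
    moreover have "real_momentum L U m (hk (p m)) = p m" by (rule rm_unique[OF m pI refl])
    ultimately show ?thesis using d0 unfolding p_def by linarith
  qed
  then show ?thesis unfolding w_def by blast
qed

end

context lw
begin

lemma T_props:
  assumes L2: "2 \<le> L" and l: "l \<in> {1..L}"
  defines "Ar \<equiv> (\<Sum>m\<in>{1..L} - {l}. real m - 1)"
  shows "\<And>x y. x < y \<Longrightarrow> T l x < T l y"
    and "\<And>x. isCont (T l) x"
    and "\<And>x. Ar - real L / 2 < T l x \<and> T l x < Ar + real L - 1 - real L / 2"
    and "\<And>t. Ar - real L / 2 < t \<Longrightarrow> \<exists>x. T l x < t"
    and "\<And>t. t < Ar + real L - 1 - real L / 2 \<Longrightarrow> \<exists>x. t < T l x"
proof -
  define M where "M = {1..L} - {l}"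
  define w where "w = 2 * pi / real L"
  define c where "c = real L / (2 * pi)"
  have w0: "0 < w" unfolding w_def by (rule w_pos)
  have c0: "0 < c" unfolding c_def using Lpos by simp
  have cw: "c * w = 1" unfolding c_def w_def using Lpos by simp
  have finM: "finite M" unfolding M_def by simp
  have cardM: "card M = L - 1" unfolding M_def using l by (simp add: card_Diff_singleton)
  have M0: "M \<noteq> {}"
  proof
    assume "M = {}"
    then have "card M = 0" by simp
    then show False using cardM L2 by simp
  qed
  have MI: "m \<in> {1..L}" if "m \<in> M" for m using that unfolding M_def by auto
  have Tc: "T l x = c * (\<Sum>m\<in>M. real_momentum L U m x) - real L / 2" for x
    unfolding T_def Sg_def M_def c_def by simp
  have Ar: "Ar = (\<Sum>m\<in>M. real m - 1)" unfolding Ar_def M_def ..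
  have sum_lo: "c * (\<Sum>m\<in>M. (real m - 1) * w) = Ar"
    unfolding Ar sum_distrib_left by (rule sum.cong) (auto simp: cw mult.left_commute[of c])
  have sum_hi: "c * (\<Sum>m\<in>M. real m * w) = Ar + real L - 1"
  proof -
    have "c * (\<Sum>m\<in>M. real m * w) = (\<Sum>m\<in>M. real m)"
      unfolding sum_distrib_left by (rule sum.cong) (auto simp: cw mult.left_commute[of c])
    also have "\<dots> = (\<Sum>m\<in>M. real m - 1) + real (card M)"
      by (simp add: sum_subtractf)
    also have "real (card M) = real L - 1" using cardM Lpos by simp
    finally show ?thesis unfolding Ar by simp
  qed
  show mono: "T l x < T l y" if "x < y" for x y
  proof -
    have "(\<Sum>m\<in>M. real_momentum L U m x) < (\<Sum>m\<in>M. real_momentum L U m y)"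
      by (rule sum_strict_mono[OF finM M0]) (use rm_mono MI that in blast)
    then show ?thesis unfolding Tc using c0 by simp
  qed
  show "isCont (T l) x" for x
    unfolding Tc[abs_def] by (intro continuous_intros isCont_sum ballI rm_cont MI)
  show "Ar - real L / 2 < T l x \<and> T l x < Ar + real L - 1 - real L / 2" for x
  proof -
    have "(\<Sum>m\<in>M. (real m - 1) * w) < (\<Sum>m\<in>M. real_momentum L U m x)"
      by (rule sum_strict_mono[OF finM M0]) (use rm_prop MI in \<open>auto simp: Iv_def w_def\<close>)
    moreover have "(\<Sum>m\<in>M. real_momentum L U m x) < (\<Sum>m\<in>M. real m * w)"
      by (rule sum_strict_mono[OF finM M0]) (use rm_prop MI in \<open>auto simp: Iv_def w_def\<close>)
    ultimately have "c * (\<Sum>m\<in>M. (real m - 1) * w) < c * (\<Sum>m\<in>M. real_momentum L U m x)"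
      "c * (\<Sum>m\<in>M. real_momentum L U m x) < c * (\<Sum>m\<in>M. real m * w)"
      using c0 by (simp_all add: mult_strict_left_mono)
    then show ?thesis unfolding Tc sum_lo sum_hi by linarith
  qed
  show "\<exists>x. T l x < t" if t: "Ar - real L / 2 < t" for t
  proof -
    define e where "e = (t - (Ar - real L / 2)) / (c * real L)"
    have e0: "0 < e" unfolding e_def using t c0 Lpos by simp
    obtain x where x: "\<forall>m\<in>{1..L}. real_momentum L U m x < (real m - 1) * w + e"
      using rm_low[OF e0] unfolding w_def by blast
    have "(\<Sum>m\<in>M. real_momentum L U m x) < (\<Sum>m\<in>M. (real m - 1) * w + e)"
      by (rule sum_strict_mono[OF finM M0]) (use x MI in blast)
    also have "\<dots> = (\<Sum>m\<in>M. (real m - 1) * w) + real (card M) * e"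
      by (simp add: sum.distrib)
    finally have s: "(\<Sum>m\<in>M. real_momentum L U m x) < (\<Sum>m\<in>M. (real m - 1) * w) + real (card M) * e" .
    have "c * (\<Sum>m\<in>M. real_momentum L U m x) < c * ((\<Sum>m\<in>M. (real m - 1) * w) + real (card M) * e)"
      by (rule mult_strict_left_mono[OF s c0])
    also have "\<dots> = Ar + c * (real (card M) * e)" using sum_lo by (simp add: distrib_left)
    finally have "T l x < Ar - real L / 2 + c * (real (card M) * e)"
      unfolding Tc by linarith
    also have "c * (real (card M) * e) = (t - (Ar - real L / 2)) * (real L - 1) / real L"
      unfolding e_def cardM using c0 Lpos by (simp add: field_simps of_nat_diff)
    also have "\<dots> < t - (Ar - real L / 2)"
      using t Lpos by (simp add: field_simps)
    finally show ?thesis by auto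
  qed
  show "\<exists>x. t < T l x" if t: "t < Ar + real L - 1 - real L / 2" for t
  proof -
    define e where "e = (Ar + real L - 1 - real L / 2 - t) / (c * real L)"
    have e0: "0 < e" unfolding e_def using t c0 Lpos by simp
    obtain x where x: "\<forall>m\<in>{1..L}. real m * w - e < real_momentum L U m x"
      using rm_high[OF e0] unfolding w_def by blast
    have "(\<Sum>m\<in>M. real m * w - e) < (\<Sum>m\<in>M. real_momentum L U m x)"
      by (rule sum_strict_mono[OF finM M0]) (use x MI in blast)
    moreover have "(\<Sum>m\<in>M. real m * w - e) = (\<Sum>m\<in>M. real m * w) - real (card M) * e"
      by (simp add: sum_subtractf)
    ultimately have s: "(\<Sum>m\<in>M. real m * w) - real (card M) * e < (\<Sum>m\<in>M. real_momentum L U m x)"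
      by simp
    have "c * ((\<Sum>m\<in>M. real m * w) - real (card M) * e) < c * (\<Sum>m\<in>M. real_momentum L U m x)"
      by (rule mult_strict_left_mono[OF s c0])
    moreover have "c * ((\<Sum>m\<in>M. real m * w) - real (card M) * e) = Ar + real L - 1 - c * (real (card M) * e)"
      using sum_hi by (simp add: right_diff_distrib)
    ultimately have "Ar + real L - 1 - real L / 2 - c * (real (card M) * e) < T l x"
      unfolding Tc by linarith
    moreover have "c * (real (card M) * e) = (Ar + real L - 1 - real L / 2 - t) * (real L - 1) / real L"
      unfolding e_def cardM using c0 Lpos by (simp add: field_simps of_nat_diff)
    moreover have "(Ar + real L - 1 - real L / 2 - t) * (real L - 1) / real L < Ar + real L - 1 - real L / 2 - t"
      using t Lpos by (simp add: field_simps)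
    ultimately have "t < T l x" by linarith
    then show ?thesis by blast
  qed
qed

end

context lw
begin

lemma card_Sl:
  assumes l: "l \<in> {1..L}"
  shows "finite {(q, \<xi>, k3, \<Lambda>) \<in> string_solutions L U. k3 = real_momentum L U l \<Lambda>} \<and>
         card {(q, \<xi>, k3, \<Lambda>) \<in> string_solutions L U. k3 = real_momentum L U l \<Lambda>}
           = (if odd L then L - 1 else L - 2)"
proof -
  define E where "E = {\<Lambda>. cis ((2 * qs \<Lambda> + real_momentum L U l \<Lambda>) * real L) = 1}"
  have E: "E = {\<Lambda>. \<exists>n::int. T l \<Lambda> = of_int n}" unfolding E_def using cond_iff_T[OF l] by blast
  have S: "{(q, \<xi>, k3, \<Lambda>) \<in> string_solutions L U. k3 = real_momentum L U l \<Lambda>} =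
         (\<lambda>\<Lambda>. (qs \<Lambda>, xs \<Lambda>, real_momentum L U l \<Lambda>, \<Lambda>)) ` E"
    unfolding E_def by (rule Sl_eq[OF l])
  have cE: "finite E \<and> card E = (if odd L then L - 1 else L - 2)"
  proof (cases "L = 1")
    case True
    have "E = {}"
    proof -
      have t: "T l \<Lambda> = - 1 / 2" for \<Lambda> using True l unfolding T_def Sg_def by simp
      have nn: "real_of_int n \<noteq> - 1 / 2" for n :: int
      proof
        assume "real_of_int n = - 1 / 2"
        then have "real_of_int (2 * n) = real_of_int (-1)" by simp
        then have "2 * n = -1" by (simp only: of_int_eq_iff)
        then show False by presburger
      qed
      have "T l \<Lambda> \<noteq> of_int n" for \<Lambda> n using t[of \<Lambda>] nn[of n] by simp
      then show ?thesis unfolding E by blast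
    qed
    then show ?thesis using True by simp
  next
    case False
    then have L2: "2 \<le> L" using Lpos by simp
    define Ar where "Ar = (\<Sum>m\<in>{1..L} - {l}. real m - 1)"
    define Ai where "Ai = (\<Sum>m\<in>{1..L} - {l}. int m - 1)"
    have AA: "Ar = of_int Ai" unfolding Ar_def Ai_def by simp
    note TP = T_props[OF L2 l]
    have ch: "finite E \<and> card E = card {n::int. Ar - real L / 2 < of_int n \<and> of_int n < Ar + real L - 1 - real L / 2}"
      unfolding E by (rule count_hits) (use TP in \<open>simp_all add: Ar_def\<close>)
    have "{n::int. Ar - real L / 2 < of_int n \<and> of_int n < Ar + real L - 1 - real L / 2} =
          {n::int. 2 * Ai - int L < 2 * n \<and> 2 * n < 2 * Ai + int L - 2}"
    proof (rule Collect_cong)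
      fix n :: int
      have "Ar - real L / 2 < of_int n \<longleftrightarrow> real_of_int (2 * Ai - int L) < real_of_int (2 * n)"
        unfolding AA by (simp add: field_simps)
      moreover have "of_int n < Ar + real L - 1 - real L / 2 \<longleftrightarrow> real_of_int (2 * n) < real_of_int (2 * Ai + int L - 2)"
        unfolding AA by (simp add: field_simps)
      ultimately show "(Ar - real L / 2 < of_int n \<and> of_int n < Ar + real L - 1 - real L / 2) \<longleftrightarrow>
          (2 * Ai - int L < 2 * n \<and> 2 * n < 2 * Ai + int L - 2)"
        by (simp only: of_int_less_iff)
    qed
    then show ?thesis using ch int_count[of L Ai] Lpos by simp
  qed
  have "card ((\<lambda>\<Lambda>. (qs \<Lambda>, xs \<Lambda>, real_momentum L U l \<Lambda>, \<Lambda>)) ` E) = card E"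
    by (rule card_image[OF Sl_inj])
  then show ?thesis unfolding S using cE by simp
qed

lemma q_range:
  assumes "(q, \<xi>, k3, \<Lambda>) \<in> string_solutions L U"
  shows "pi / 2 < q \<and> q < 3 * pi / 2"
proof -
  let ?k = "Complex q (- \<xi>)"
  from assms have q: "0 \<le> q" "q < 2 * pi" and xi: "0 < \<xi>"
    and eq: "exp (\<i> * ?k * of_nat L) = lw_theta U \<Lambda> ?k"
    unfolding string_solutions_def lieb_wu3_def by auto
  define x where "x = complex_of_real \<Lambda> - sin ?k"
  define u where "u = U / 4"
  have u0: "0 < u" unfolding u_def using Upos by simp
  have "cmod (exp (\<i> * ?k * of_nat L)) = exp (\<xi> * real L)"
    by (simp add: norm_exp_eq_Re)
  moreover have "1 < exp (\<xi> * real L)" using xi Lpos by simp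
  ultimately have big1: "1 < cmod ((x - \<i> * of_real u) / (x + \<i> * of_real u))"
    using eq unfolding lw_theta_def x_def u_def by simp
  have nz: "x + \<i> * of_real u \<noteq> 0" using big1 by auto
  then have "cmod (x + \<i> * of_real u) < cmod (x - \<i> * of_real u)"
    using big1 by (simp add: norm_divide divide_simps)
  then have "(cmod (x + \<i> * of_real u))\<^sup>2 < (cmod (x - \<i> * of_real u))\<^sup>2"
    by (simp add: power_strict_mono)
  then have "(Re x)\<^sup>2 + (Im x + u)\<^sup>2 < (Re x)\<^sup>2 + (Im x - u)\<^sup>2"
    by (simp add: cmod_power2)
  then have "u * Im x < 0" by (simp add: power2_eq_square algebra_simps)
  then have imx: "Im x < 0" using u0 by (simp add: mult_less_0_iff)
  have "Im x = cos q * (exp \<xi> - exp (- \<xi>)) / 2"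
    unfolding x_def by (simp add: Im_sin) (simp add: field_simps)
  then have p: "cos q * (exp \<xi> - exp (- \<xi>)) < 0" using imx by simp
  have d: "0 < exp \<xi> - exp (- \<xi>)" using xi by simp
  have cq: "cos q < 0" using p d by (simp add: mult_less_0_iff)
  have "pi / 2 < q"
  proof (rule ccontr)
    assume "\<not> pi / 2 < q"
    then have "0 \<le> cos q" using q by (intro cos_ge_zero) auto
    then show False using cq by simp
  qed
  moreover have "q < 3 * pi / 2"
  proof (rule ccontr)
    assume "\<not> q < 3 * pi / 2"
    then have "0 \<le> cos (q - 2 * pi)" using q by (intro cos_ge_zero) auto
    then show False using cq by (simp add: cos_diff)
  qed
  ultimately show ?thesis by simp
qed

lemma sols_union:
  "string_solutions L U =
     (\<Union>l\<in>{1..L}. {(q, \<xi>, k3, \<Lambda>) \<in> string_solutions L U. k3 = real_momentum L U l \<Lambda>})"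
proof (rule set_eqI)
  fix s :: "real \<times> real \<times> real \<times> real"
  obtain q \<xi> k3 \<Lambda> where s: "s = (q, \<xi>, k3, \<Lambda>)" by (cases s) auto
  show "s \<in> string_solutions L U \<longleftrightarrow>
        s \<in> (\<Union>l\<in>{1..L}. {(q, \<xi>, k3, \<Lambda>) \<in> string_solutions L U. k3 = real_momentum L U l \<Lambda>})"
  proof
    assume "s \<in> string_solutions L U"
    then have sol: "(q, \<xi>, k3, \<Lambda>) \<in> string_solutions L U" unfolding s .
    note S = sol[unfolded sol_iff]
    have "cis k3 \<in> Zs \<Lambda>" using S by (intro circle_root) auto
    then obtain l where l: "l \<in> {1..L}" "cis k3 = cis (real_momentum L U l \<Lambda>)"
      unfolding Zs_def by auto
    have "k3 = real_momentum L U l \<Lambda>"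
      using l S rm_range[OF l(1), of \<Lambda>] by (intro cis_inj02) auto
    then show "s \<in> (\<Union>l\<in>{1..L}. {(q, \<xi>, k3, \<Lambda>) \<in> string_solutions L U. k3 = real_momentum L U l \<Lambda>})"
      using sol l(1) unfolding s by auto
  qed auto
qed

lemma card_total:
  "finite (string_solutions L U) \<and>
   card (string_solutions L U) = (if odd L then L * (L - 1) else L * (L - 2))"
proof -
  let ?S = "\<lambda>l. {(q, \<xi>, k3, \<Lambda>) \<in> string_solutions L U. k3 = real_momentum L U l \<Lambda>}"
  have fin: "\<forall>l\<in>{1..L}. finite (?S l)" using card_Sl by blast
  have disj: "\<forall>l\<in>{1..L}. \<forall>m\<in>{1..L}. l \<noteq> m \<longrightarrow> ?S l \<inter> ?S m = {}"
  proof (intro ballI impI)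
    fix l m assume lm: "l \<in> {1..L}" "m \<in> {1..L}" "l \<noteq> m"
    show "?S l \<inter> ?S m = {}"
    proof (rule ccontr)
      assume "?S l \<inter> ?S m \<noteq> {}"
      then obtain s where s: "s \<in> ?S l" "s \<in> ?S m" by blast
      obtain q \<xi> k3 \<Lambda> where sq: "s = (q, \<xi>, k3, \<Lambda>)" by (cases s) auto
      have "k3 = real_momentum L U l \<Lambda>" "k3 = real_momentum L U m \<Lambda>" using s unfolding sq by auto
      then have "l = m" using rm_inj lm by metis
      then show False using lm by simp
    qed
  qed
  have "card (\<Union>l\<in>{1..L}. ?S l) = (\<Sum>l\<in>{1..L}. card (?S l))"
    by (rule card_UN_disjoint) (use fin disj in auto)
  also have "\<dots> = (\<Sum>l\<in>{1..L}. (if odd L then L - 1 else L - 2))"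
    by (rule sum.cong) (use card_Sl in auto)
  also have "\<dots> = (if odd L then L * (L - 1) else L * (L - 2))" by simp
  finally have c: "card (\<Union>l\<in>{1..L}. ?S l) = (if odd L then L * (L - 1) else L * (L - 2))" .
  have f: "finite (\<Union>l\<in>{1..L}. ?S l)" using fin by auto
  have eq: "string_solutions L U = (\<Union>l\<in>{1..L}. ?S l)" by (rule sols_union)
  show ?thesis using c f by (metis eq)
qed

end

theorem mainTheorem5:
  fixes L :: nat and U :: real
  assumes "0 < L" and "0 < U" and "real L > 8 / U"
  shows "(\<forall>(q, \<xi>, k3, \<Lambda>) \<in> string_solutions L U. pi / 2 < q \<and> q < 3 * pi / 2)
    \<and> (\<forall>l \<in> {1..L}.
          finite {(q, \<xi>, k3, \<Lambda>) \<in> string_solutions L U. k3 = real_momentum L U l \<Lambda>} \<and>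
          card {(q, \<xi>, k3, \<Lambda>) \<in> string_solutions L U. k3 = real_momentum L U l \<Lambda>}
            = (if odd L then L - 1 else L - 2))
    \<and> finite (string_solutions L U)
    \<and> card (string_solutions L U) = (if odd L then L * (L - 1) else L * (L - 2))"
proof -
  have "8 < U * real L" using assms(2,3) by (simp add: pos_divide_less_eq mult.commute)
  then interpret lw L U using assms(1,2) by unfold_locales auto
  show ?thesis using q_range card_Sl card_total by auto
qed


end
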